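(* Let $\mathcal{A}$ be a complex Banach algebra with unity and $a,b\in\mathcal{A}$. Then $ab$ is g$\pi$-Hirano invertible if and only if $ba$ is g$\pi$-Hirano invertible.
   Context: $\mathcal{A}^{qnil}$ denotes the set of quasinilpotent elements of $\mathcal{A}$ (spectrum equal to $\{0\}$). An element $a\in\mathcal{A}$ is g$\pi$-Hirano invertible if there exists $x\in\mathcal{A}$ with $xax=x$, $ax=xa$ and $a-a^{n+2}x\in\mathcal{A}^{qnil}$ for some positive integer $n$. *)

theory Defs
  imports "HOL-Analysis.Analysis"
begin

class complex_banach_algebra_1 = real_normed_algebra_1 + banach +
  fixes scaleC :: "complex \<Rightarrow> 'a \<Rightarrow> 'a"
  assumes scaleR_scaleC: "scaleR r x = scaleC (of_real r) x"
    and scaleC_add_right: "scaleC c (x + y) = scaleC c x + scaleC c y"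
    and scaleC_add_left: "scaleC (c + d) x = scaleC c x + scaleC d x"
    and scaleC_scaleC: "scaleC c (scaleC d x) = scaleC (c * d) x"
    and scaleC_one: "scaleC 1 x = x"
    and norm_scaleC: "norm (scaleC c x) = cmod c * norm x"
    and mult_scaleC_left: "scaleC c x * y = scaleC c (x * y)"
    and mult_scaleC_right: "x * scaleC c y = scaleC c (x * y)"

definition invertible_el :: "'a::ring_1 \<Rightarrow> bool" where
  "invertible_el x \<longleftrightarrow> (\<exists>y. x * y = 1 \<and> y * x = 1)"

definition spectrum :: "'a::complex_banach_algebra_1 \<Rightarrow> complex set" where
  "spectrum a = {z. \<not> invertible_el (a - scaleC z 1)}"

definition quasinilpotent :: "'a::complex_banach_algebra_1 \<Rightarrow> bool" where
  "quasinilpotent a \<longleftrightarrow> spectrum a = {0}"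

definition gpi_Hirano_invertible :: "'a::complex_banach_algebra_1 \<Rightarrow> bool" where
  "gpi_Hirano_invertible a \<longleftrightarrow>
     (\<exists>x. x * a * x = x \<and> a * x = x * a \<and>
          (\<exists>n::nat. n > 0 \<and> quasinilpotent (a - a ^ (n + 2) * x)))"

end

theory Submission
  imports Defs
begin


context
  fixes dummy :: "'a::complex_banach_algebra_1"
begin
end

lemma scaleC_zero_left [simp]: "scaleC 0 (x::'a::complex_banach_algebra_1) = 0"
  using scaleC_add_left[of 0 0 x] by simp

lemma scaleC_zero_right [simp]: "scaleC c (0::'a::complex_banach_algebra_1) = 0"
  using scaleC_add_right[of c 0 0] by simp

lemma scaleC_minus_left: "scaleC (- c) (x::'a::complex_banach_algebra_1) = - scaleC c x"
proof -
  have "scaleC (-c) x + scaleC c x = 0" using scaleC_add_left[of "-c" c x] by simp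
  then show ?thesis by (simp add: add_eq_0_iff2)
qed

lemma scaleC_diff_left: "scaleC (c - d) (x::'a::complex_banach_algebra_1) = scaleC c x - scaleC d x"
  using scaleC_add_left[of c "-d" x] by (simp add: scaleC_minus_left)

lemma scaleC_minus_right: "scaleC c (- x::'a::complex_banach_algebra_1) = - scaleC c x"
proof -
  have "scaleC c (-x) + scaleC c x = 0" using scaleC_add_right[of c "-x" x] by simp
  then show ?thesis by (simp add: add_eq_0_iff2)
qed

lemma scaleC_diff_right: "scaleC c (x - y::'a::complex_banach_algebra_1) = scaleC c x - scaleC c y"
  using scaleC_add_right[of c x "-y"] by (simp add: scaleC_minus_right)

lemma scaleC_sum_left: "scaleC (\<Sum>i\<in>A. f i) (x::'a::complex_banach_algebra_1) = (\<Sum>i\<in>A. scaleC (f i) x)"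
  by (induction A rule: infinite_finite_induct) (auto simp: scaleC_add_left)

lemma scaleC_sum_right: "scaleC c (\<Sum>i\<in>A. f i) = (\<Sum>i\<in>A. scaleC c (f i::'a::complex_banach_algebra_1))"
  by (induction A rule: infinite_finite_induct) (auto simp: scaleC_add_right)

lemma scaleC_of_real: "scaleC (of_real r) (x::'a::complex_banach_algebra_1) = scaleR r x"
  by (simp add: scaleR_scaleC)

lemma scaleC_of_nat: "scaleC (of_nat n) (x::'a::complex_banach_algebra_1) = of_nat n * x"
proof -
  have "scaleC (of_nat n) x = scaleC (of_real (real n)) x" by simp
  also have "\<dots> = scaleR (real n) x" by (rule scaleC_of_real)
  also have "\<dots> = of_nat n * x" by (simp add: scaleR_conv_of_real)
  finally show ?thesis .
qed

lemma scaleC_power: "(scaleC c (x::'a::complex_banach_algebra_1)) ^ m = scaleC (c ^ m) (x ^ m)"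
  by (induction m) (auto simp: scaleC_one mult_scaleC_left mult_scaleC_right scaleC_scaleC mult.commute)

lemma scaleC_commute: "scaleC c 1 * (y::'a::complex_banach_algebra_1) = y * scaleC c 1"
  by (simp add: mult_scaleC_left mult_scaleC_right)

lemma inv_prod:
  fixes p q :: "'a::ring_1"
  assumes "invertible_el p" "invertible_el q"
  shows "invertible_el (p * q)"
proof -
  obtain p' where p: "p * p' = 1" "p' * p = 1" using assms(1) unfolding invertible_el_def by blast
  obtain q' where q: "q * q' = 1" "q' * q = 1" using assms(2) unfolding invertible_el_def by blast
  have "(p * q) * (q' * p') = 1" by (metis mult.assoc mult_1_left p(1) q(1))
  moreover have "(q' * p') * (p * q) = 1" by (metis mult.assoc mult_1_left p(2) q(2))
  ultimately show ?thesis unfolding invertible_el_def by blast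
qed



lemma inv_bound:
  fixes w w' v v' :: "'a::real_normed_algebra_1"
  assumes w: "w * w' = 1" "w' * w = 1" and v: "v * v' = 1" "v' * v = 1"
    and small: "norm w' * norm (v - w) \<le> 1/2"
  shows "norm (v' - w') \<le> 2 * norm w' ^ 2 * norm (v - w)"
proof -
  have eq: "v' - w' = w' * (w - v) * v'"
  proof -
    have "w' * (w - v) * v' = (w' * w) * v' - w' * (v * v')" by (simp add: algebra_simps mult.assoc)
    then show ?thesis using w v by simp
  qed
  have nwv: "norm (w - v) = norm (v - w)" by (rule norm_minus_commute)
  have b1: "norm (v' - w') \<le> norm w' * norm (v - w) * norm v'"
  proof -
    have "norm (w' * (w - v) * v') \<le> norm (w' * (w - v)) * norm v'" by (rule norm_mult_ineq)
    also have "\<dots> \<le> norm w' * norm (w - v) * norm v'"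
      by (rule mult_right_mono[OF norm_mult_ineq norm_ge_zero])
    finally show ?thesis unfolding eq nwv .
  qed
  have "norm v' \<le> norm w' + norm (v' - w')" by (rule norm_triangle_sub)
  also have "\<dots> \<le> norm w' + norm v' / 2"
  proof -
    have "norm w' * norm (v - w) * norm v' \<le> 1/2 * norm v'"
      by (rule mult_right_mono[OF small norm_ge_zero])
    then show ?thesis using b1 by linarith
  qed
  finally have nv: "norm v' \<le> 2 * norm w'" by simp
  have "norm (v' - w') \<le> norm w' * norm (v - w) * (2 * norm w')"
  proof -
    have "norm w' * norm (v - w) * norm v' \<le> norm w' * norm (v - w) * (2 * norm w')"
      by (rule mult_left_mono[OF nv]) simp
    then show ?thesis using b1 by linarith
  qed
  then show ?thesis by (simp add: power2_eq_square mult_ac)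
qed

definition inv_el :: "'a::ring_1 \<Rightarrow> 'a" where
  "inv_el y = (SOME z. y * z = 1 \<and> z * y = 1)"

lemma inv_el: "invertible_el y \<Longrightarrow> y * inv_el y = 1 \<and> inv_el y * y = 1"
  unfolding inv_el_def invertible_el_def by (rule someI_ex)

lemma geom_ring: "(1 - (y::'a::ring_1)) * (\<Sum>m<n. y ^ m) = 1 - y ^ n"
proof (induction n)
  case (Suc n)
  have "(1 - y) * (\<Sum>m<Suc n. y ^ m) = (1 - y) * (\<Sum>m<n. y ^ m) + (1 - y) * y ^ n"
    by (simp add: distrib_left)
  also have "\<dots> = 1 - y ^ Suc n" using Suc by (simp add: left_diff_distrib)
  finally show ?case .
qed simp

lemma sum_even_odd: "(\<Sum>k<2 * N. f k) = (\<Sum>k<N. f (2 * k) + f (2 * k + 1))"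
  for f :: "nat \<Rightarrow> 'b::comm_monoid_add"
  by (induction N) (auto simp: add_ac)

definition om :: "nat \<Rightarrow> complex" where "om n = cis (2 * pi / real n)"

lemma om_pow: "om n ^ m = cis (2 * pi * real m / real n)"
proof -
  have "om n ^ m = cis (real m * (2 * pi / real n))" unfolding om_def by (rule Complex.DeMoivre)
  also have "real m * (2 * pi / real n) = 2 * pi * real m / real n" by simp
  finally show ?thesis .
qed

lemma om_pow_n: "n > 0 \<Longrightarrow> om n ^ n = 1"
  unfolding om_pow by (simp add: complex_eq_iff)

lemma om_pow_ne1: assumes "0 < m" "m < n" shows "om n ^ m \<noteq> 1"
proof
  assume h: "om n ^ m = 1"
  have "n > 0" using assms by simp
  from Complex.bij_betw_roots_unity[OF this] have inj: "inj_on (\<lambda>k. cis (2 * pi * real k / real n)) {..<n}"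
    by (simp add: bij_betw_def)
  have "cis (2 * pi * real m / real n) = cis (2 * pi * real 0 / real n)" using h by (simp add: om_pow)
  then have "m = 0" using inj_onD[OF inj] assms by auto
  then show False using assms by simp
qed

lemma sum_om: assumes "m < n" shows "(\<Sum>k<n. (om n ^ m) ^ k) = (if m = 0 then of_nat n else 0)"
proof (cases "m = 0")
  case True then show ?thesis by simp
next
  case False
  then have ne: "om n ^ m \<noteq> 1" using om_pow_ne1 assms by simp
  have "(om n ^ m) ^ n = om n ^ (m * n)" by (rule power_mult[symmetric])
  also have "\<dots> = om n ^ (n * m)" by (simp add: mult.commute)
  also have "\<dots> = (om n ^ n) ^ m" by (rule power_mult)
  finally have "(om n ^ m) ^ n = (om n ^ n) ^ m" .
  then have "(om n ^ m) ^ n = 1" using om_pow_n[of n] assms by simp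
  then show ?thesis using False ne by (simp add: geometric_sum)
qed

lemma om_double: "om (2 * n) ^ 2 = om n"
proof -
  have "om (2 * n) ^ 2 = cis (2 * pi * real 2 / real (2 * n))" by (rule om_pow)
  also have "2 * pi * real 2 / real (2 * n) = 2 * pi / real n" by simp
  finally show ?thesis unfolding om_def .
qed

lemma norm_om_pow [simp]: "norm (om n ^ k) = 1"
  unfolding om_def by (simp add: norm_power)


definition gg :: "'a::complex_banach_algebra_1 \<Rightarrow> complex \<Rightarrow> 'a" where
  "gg t w = inv_el (1 - scaleC w t)"

definition AA :: "'a::complex_banach_algebra_1 \<Rightarrow> nat \<Rightarrow> complex \<Rightarrow> 'a" where
  "AA t n z = scaleR (1 / real n) (\<Sum>k<n. gg t (om n ^ k * z))"

context
  fixes t :: "'a::complex_banach_algebra_1"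
  assumes allinv: "\<And>w. invertible_el (1 - scaleC w t)"
begin

lemma gg_spec: "(1 - scaleC w t) * gg t w = 1" "gg t w * (1 - scaleC w t) = 1"
  using inv_el[OF allinv[of w]] unfolding gg_def by auto

lemma gg_comm: "gg t w * t = t * gg t w"
proof -
  define q where "q = 1 - scaleC w t"
  define g where "g = gg t w"
  have qg: "q * g = 1" "g * q = 1" using gg_spec[of w] by (simp_all add: q_def g_def)
  have qt: "q * t = t * q" by (simp add: q_def algebra_simps mult_scaleC_left mult_scaleC_right)
  have "t * g = (g * q) * t * g" using qg by simp
  also have "\<dots> = g * (q * t) * g" by (simp add: mult.assoc)
  also have "\<dots> = g * t * (q * g)" by (simp add: qt mult.assoc)
  also have "\<dots> = g * t" using qg by simp
  finally show ?thesis by (simp add: g_def)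
qed

lemma AA_comm: "AA t n z * t = t * AA t n z"
  unfolding AA_def by (simp add: mult_scaleR_left mult_scaleR_right sum_distrib_left sum_distrib_right gg_comm)

lemma gg_X:
  assumes "n > 0"
  shows "gg t (om n ^ k * z) * (1 - scaleC (z ^ n) (t ^ n)) = (\<Sum>m<n. scaleC ((om n ^ k * z) ^ m) (t ^ m))"
proof -
  define w where "w = om n ^ k * z"
  define y where "y = scaleC w t"
  have "(om n ^ k) ^ n = (om n ^ n) ^ k" by (metis power_mult mult.commute)
  then have "w ^ n = z ^ n" using om_pow_n[OF assms] by (simp add: w_def power_mult_distrib)
  then have yn: "y ^ n = scaleC (z ^ n) (t ^ n)" by (simp add: y_def scaleC_power)
  have "gg t w * (1 - scaleC (z ^ n) (t ^ n)) = gg t w * ((1 - y) * (\<Sum>m<n. y ^ m))"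
    by (simp add: geom_ring yn)
  also have "\<dots> = (gg t w * (1 - y)) * (\<Sum>m<n. y ^ m)" by (simp add: mult.assoc)
  also have "\<dots> = (\<Sum>m<n. y ^ m)" using gg_spec(2)[of w] by (simp add: y_def)
  finally show ?thesis by (simp add: w_def y_def scaleC_power)
qed

lemma AA_inv:
  assumes "n > 0"
  shows "AA t n z * (1 - scaleC (z ^ n) (t ^ n)) = 1"
proof -
  let ?X = "1 - scaleC (z ^ n) (t ^ n)"
  have "(\<Sum>k<n. gg t (om n ^ k * z)) * ?X = (\<Sum>k<n. \<Sum>m<n. scaleC ((om n ^ k * z) ^ m) (t ^ m))"
    by (simp add: sum_distrib_right gg_X[OF assms])
  also have "\<dots> = (\<Sum>m<n. \<Sum>k<n. scaleC ((om n ^ k * z) ^ m) (t ^ m))" by (rule sum.swap)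
  also have "\<dots> = (\<Sum>m<n. scaleC (z ^ m * (\<Sum>k<n. (om n ^ m) ^ k)) (t ^ m))"
  proof (rule sum.cong[OF refl])
    fix m assume "m \<in> {..<n}"
    have "(om n ^ k * z) ^ m = z ^ m * (om n ^ m) ^ k" for k
      by (simp add: power_mult_distrib mult.commute flip: power_mult)
    then show "(\<Sum>k<n. scaleC ((om n ^ k * z) ^ m) (t ^ m)) = scaleC (z ^ m * (\<Sum>k<n. (om n ^ m) ^ k)) (t ^ m)"
      by (simp add: scaleC_sum_left sum_distrib_left)
  qed
  also have "\<dots> = (\<Sum>m<n. (if m = 0 then scaleC (of_nat n) 1 else 0))"
    by (rule sum.cong[OF refl]) (simp add: sum_om)
  also have "\<dots> = of_nat n" using assms by (simp add: scaleC_of_nat)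
  finally have S: "(\<Sum>k<n. gg t (om n ^ k * z)) * ?X = of_nat n" .
  have "AA t n z * ?X = scaleR (1 / real n) ((\<Sum>k<n. gg t (om n ^ k * z)) * ?X)"
    by (simp add: AA_def mult_scaleR_left)
  also have "\<dots> = scaleR (1 / real n) (of_nat n)" using S by simp
  also have "\<dots> = of_real (1 / real n) * of_real (real n)" by (simp add: scaleR_conv_of_real)
  also have "\<dots> = (of_real (1 / real n * real n) :: 'a)" by (simp only: of_real_mult)
  also have "\<dots> = 1" using assms by simp
  finally show ?thesis .
qed

lemma AA_inv':
  assumes "n > 0"
  shows "(1 - scaleC (z ^ n) (t ^ n)) * AA t n z = 1"
proof -
  have c: "AA t n z * t ^ n = t ^ n * AA t n z"
    by (metis AA_comm power_commuting_commutes)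
  have "(1 - scaleC (z ^ n) (t ^ n)) * AA t n z = AA t n z * (1 - scaleC (z ^ n) (t ^ n))"
    by (simp add: algebra_simps mult_scaleC_left mult_scaleC_right c)
  then show ?thesis using AA_inv[OF assms] by simp
qed

end



lemma ring_key:
  fixes h h2 u :: "'a::ring_1"
  assumes h1: "h * (1 - u) = 1" and h2: "(1 - u) * h = 1"
    and h3: "h2 * (1 - u * u) = 1" and c: "u * h2 = h2 * u"
  shows "(h - 1) * h = (h - h2) * (h + h - 1)"
proof -
  have uh: "u * h = h - 1" using h2 by (simp add: algebra_simps)
  have hu: "h * u = h - 1" using h1 by (simp add: algebra_simps)
  have a: "h2 * (1 + u) = h"
  proof -
    have "h2 * (1 + u) = h2 * (1 + u) * ((1 - u) * h)" using h2 by simp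
    also have "\<dots> = h2 * ((1 + u) * (1 - u)) * h" by (simp add: mult.assoc)
    also have "(1 + u) * (1 - u) = 1 - u * u" by (simp add: algebra_simps)
    finally show ?thesis using h3 by simp
  qed
  have b: "h - h2 = h2 * u" using a by (simp add: algebra_simps)
  have d: "h + h - 1 = (1 + u) * h" using uh by (simp add: algebra_simps)
  have "(h - h2) * (h + h - 1) = h2 * u * ((1 + u) * h)" using b d by simp
  also have "\<dots> = h2 * (1 + u) * u * h" by (simp add: algebra_simps mult.assoc)
  also have "\<dots> = h * u * h" using a by simp
  also have "\<dots> = (h - 1) * h" using hu by simp
  finally show ?thesis by simp
qed

context
  fixes t :: "'a::complex_banach_algebra_1"
  assumes allinv: "\<And>w. invertible_el (1 - scaleC w t)"
begin

lemma gg_cont: "continuous_on UNIV (gg t)"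
  unfolding continuous_on_iff
proof (intro ballI allI impI)
  fix z0 :: complex and e :: real
  assume "z0 \<in> UNIV" and e: "e > 0"
  define K where "K = norm (gg t z0)"
  define nt where "nt = norm t + 1"
  define M where "M = (K + 1)^2"
  define C where "C = 2 * M * nt"
  have K0: "K \<ge> 0" by (simp add: K_def)
  have nt0: "nt > 0" using norm_ge_zero[of t] unfolding nt_def by linarith
  have M1: "M \<ge> 1" using K0 by (simp add: M_def one_le_power)
  have KM: "K \<le> M" using K0 by (simp add: M_def power2_eq_square algebra_simps)
  have K2M: "K^2 \<le> M" using K0 unfolding M_def by (intro power_mono) auto
  have C0: "C > 0" using M1 nt0 by (simp add: C_def)
  define d where "d = min (1 / C) (e / C)"
  have d0: "d > 0" using C0 e by (simp add: d_def)
  show "\<exists>d>0. \<forall>z\<in>UNIV. dist z z0 < d \<longrightarrow> dist (gg t z) (gg t z0) < e"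
  proof (intro exI[of _ d] conjI ballI impI d0)
    fix z assume "z \<in> (UNIV :: complex set)" and dz: "dist z z0 < d"
    define D where "D = norm ((1 - scaleC z t) - (1 - scaleC z0 t))"
    have "D = norm (scaleC (z0 - z) t)" by (simp add: D_def scaleC_diff_left)
    also have "\<dots> = cmod (z0 - z) * norm t" by (simp add: norm_scaleC)
    finally have D: "D = cmod (z - z0) * norm t" by (simp add: norm_minus_commute)
    have D0: "D \<ge> 0" by (simp add: D_def)
    have cz: "cmod (z - z0) < d" using dz by (simp add: dist_norm)
    have "D \<le> cmod (z - z0) * nt" unfolding D nt_def by (intro mult_left_mono) auto
    also have "\<dots> < d * nt" using cz nt0 by simp
    finally have Dd: "D < d * nt" .
    have "M * (d * nt) \<le> M * (1 / C * nt)" using M1 nt0 by (intro mult_left_mono mult_right_mono) (auto simp: d_def)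
    also have "\<dots> = 1/2" using M1 nt0 by (simp add: C_def field_simps)
    finally have Mh: "M * (d * nt) \<le> 1/2" .
    have "M * (d * nt) \<le> M * (e / C * nt)" using M1 nt0 by (intro mult_left_mono mult_right_mono) (auto simp: d_def)
    also have "\<dots> = e / 2" using M1 nt0 by (simp add: C_def field_simps)
    finally have Me: "M * (d * nt) \<le> e / 2" .
    have "K * D \<le> M * D" using KM D0 by (rule mult_right_mono)
    also have "\<dots> \<le> M * (d * nt)" using Dd M1 by (intro mult_left_mono) auto
    finally have small: "norm (gg t z0) * D \<le> 1/2" using Mh by (simp add: K_def)
    have b: "norm (gg t z - gg t z0) \<le> 2 * norm (gg t z0) ^ 2 * D"
      unfolding D_def
      by (rule inv_bound[OF gg_spec(1)[OF allinv] gg_spec(2)[OF allinv] gg_spec(1)[OF allinv] gg_spec(2)[OF allinv]]) (use small in \<open>simp add: D_def\<close>)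
    have "2 * K ^ 2 * D \<le> 2 * M * D" using K2M D0 by (intro mult_right_mono) auto
    also have "\<dots> < 2 * M * (d * nt)" using Dd M1 by (intro mult_strict_left_mono) auto
    finally have "2 * K ^ 2 * D < e" using Me by simp
    then show "dist (gg t z) (gg t z0) < e" using b by (simp add: dist_norm K_def)
  qed
qed

lemma AA_cont: "continuous_on UNIV (AA t n)"
proof -
  have "continuous_on UNIV (\<lambda>z. gg t (om n ^ k * z))" for k
    by (rule continuous_on_compose2[OF gg_cont]) (auto intro!: continuous_intros)
  then show ?thesis unfolding AA_def[abs_def]
    by (intro continuous_intros) auto
qed

lemma AA_diff:
  assumes n: "n > 0"
    and b: "\<And>k. k < n \<Longrightarrow> norm (gg t (om n ^ k * (om (2 * n) * z)) - gg t (om n ^ k * z)) \<le> \<epsilon>"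
  shows "norm (AA t (2 * n) z - AA t n z) \<le> \<epsilon> / 2"
proof -
  define S1 where "S1 = (\<Sum>k<n. gg t (om n ^ k * z))"
  define S2 where "S2 = (\<Sum>k<n. gg t (om n ^ k * (om (2 * n) * z)))"
  have p1: "om (2 * n) ^ (2 * k) = om n ^ k" for k by (simp add: power_mult om_double)
  have p2: "om (2 * n) ^ Suc (2 * k) * z = om n ^ k * (om (2 * n) * z)" for k
    by (simp only: power_Suc p1) (simp add: mult_ac)
  have "(\<Sum>k<2 * n. gg t (om (2 * n) ^ k * z)) = S1 + S2"
    by (simp add: sum_even_odd sum.distrib S1_def S2_def p1 p2 del: power_Suc)
  then have A2: "AA t (2 * n) z = scaleR (1 / real (2 * n)) (S1 + S2)" by (simp add: AA_def)
  have A1: "AA t n z = scaleR (1 / real (2 * n)) (S1 + S1)"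
  proof -
    have "scaleR (1 / real (2 * n)) (S1 + S1) = scaleR (1 / real (2 * n)) (scaleR 2 S1)"
      by (simp only: scaleR_2)
    also have "\<dots> = scaleR (1 / real (2 * n) * 2) S1" by (simp only: scaleR_scaleR)
    also have "1 / real (2 * n) * 2 = 1 / real n" using n by simp
    finally have e1: "scaleR (1 / real (2 * n)) (S1 + S1) = scaleR (1 / real n) S1" .
    have "AA t n z = scaleR (1 / real n) S1" by (simp add: AA_def S1_def)
    then show ?thesis using e1 by simp
  qed
  have "AA t (2 * n) z - AA t n z = scaleR (1 / real (2 * n)) (S2 - S1)"
    unfolding A1 A2 by (simp add: algebra_simps scaleR_diff_right)
  also have "S2 - S1 = (\<Sum>k<n. gg t (om n ^ k * (om (2 * n) * z)) - gg t (om n ^ k * z))"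
    by (simp add: S1_def S2_def sum_subtractf)
  finally have eq: "AA t (2 * n) z - AA t n z = scaleR (1 / real (2 * n)) (\<Sum>k<n. gg t (om n ^ k * (om (2 * n) * z)) - gg t (om n ^ k * z))" .
  have "norm (\<Sum>k<n. gg t (om n ^ k * (om (2 * n) * z)) - gg t (om n ^ k * z)) \<le> (\<Sum>k<n. norm (gg t (om n ^ k * (om (2 * n) * z)) - gg t (om n ^ k * z)))"
    by (rule norm_sum)
  also have "\<dots> \<le> of_nat (card {..<n}) * \<epsilon>" by (rule sum_bounded_above) (use b in auto)
  finally have "norm (\<Sum>k<n. gg t (om n ^ k * (om (2 * n) * z)) - gg t (om n ^ k * z)) \<le> real n * \<epsilon>" by simp
  then have "1 / real (2 * n) * norm (\<Sum>k<n. gg t (om n ^ k * (om (2 * n) * z)) - gg t (om n ^ k * z)) \<le> 1 / real (2 * n) * (real n * \<epsilon>)"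
    by (rule mult_left_mono) simp
  then have "norm (AA t (2 * n) z - AA t n z) \<le> 1 / real (2 * n) * (real n * \<epsilon>)"
    unfolding eq by simp
  also have "\<dots> = \<epsilon> / 2" using n by (simp add: field_simps)
  finally show ?thesis .
qed

end



lemma pow_inv: "(t::'a::ring_1) * x = 1 \<Longrightarrow> t ^ n * x ^ n = 1"
proof (induction n)
  case (Suc n)
  have a: "t ^ Suc n = t ^ n * t" by (rule power_Suc2)
  have b: "x ^ Suc n = x * x ^ n" by (rule power_Suc)
  have "t ^ Suc n * x ^ Suc n = t ^ n * (t * x) * x ^ n" unfolding a b by (simp only: mult.assoc)
  then show ?case using Suc by simp
qed simp

lemma core_false:
  fixes t xi :: "'a::complex_banach_algebra_1"
  assumes allinv: "\<And>w. invertible_el (1 - scaleC w t)"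
    and tx: "t * xi = 1"
  shows False
proof -
  define P where "P = 3 * norm xi + 3"
  have P0: "P > 0" unfolding P_def using norm_ge_zero[of xi] by linarith
  have Pr: "norm xi / P \<le> 1/3" using P0 unfolding P_def by (simp add: field_simps)
  have uc: "uniformly_continuous_on (cball 0 P) (gg t)"
    by (rule compact_uniformly_continuous[OF continuous_on_subset[OF gg_cont[OF allinv]]]) auto
  obtain \<delta> where d0: "\<delta> > 0"
    and dd: "\<And>z z'. z \<in> cball 0 P \<Longrightarrow> z' \<in> cball 0 P \<Longrightarrow> dist z' z < \<delta> \<Longrightarrow> dist (gg t z') (gg t z) < 1/16"
    using uc unfolding uniformly_continuous_on_def by (meson zero_less_divide_1_iff zero_less_numeral)
  have lim: "(\<lambda>N. om (2 * N)) \<longlonglongrightarrow> 1"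
  proof -
    have "(\<lambda>N. cis (pi / real N)) \<longlonglongrightarrow> cis 0"
      by (intro tendsto_cis lim_const_over_n)
    moreover have "om (2 * N) = cis (pi / real N)" for N by (simp add: om_def)
    ultimately show ?thesis by simp
  qed
  obtain no where no: "\<And>N. N \<ge> no \<Longrightarrow> norm (om (2 * N) - 1) < \<delta> / P"
    using LIMSEQ_D[OF lim, of "\<delta> / P"] d0 P0 by auto
  define N where "N = Suc no"
  have N0: "N > 0" and omN: "norm (om (2 * N) - 1) < \<delta> / P" using no[of N] by (auto simp: N_def)
  have diff: "norm (AA t (2 * N) z - AA t N z) \<le> 1/32" if z: "cmod z \<le> P" for z
  proof -
    have "norm (AA t (2 * N) z - AA t N z) \<le> (1/16) / 2"
    proof (rule AA_diff[OF allinv N0])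
      fix k assume "k < N"
      have in1: "om N ^ k * z \<in> cball 0 P" using z by (simp add: norm_mult)
      have "cmod (om (2 * N)) = 1" by (simp add: om_def)
      then have in2: "om N ^ k * (om (2 * N) * z) \<in> cball 0 P" using z
        by (simp add: norm_mult)
      have "dist (om N ^ k * (om (2 * N) * z)) (om N ^ k * z) = cmod z * cmod (om (2 * N) - 1)"
      proof -
        have eqd: "om N ^ k * (om (2 * N) * z) - om N ^ k * z = om N ^ k * (z * (om (2 * N) - 1))"
          by (simp add: algebra_simps)
        show ?thesis unfolding dist_norm eqd by (simp add: norm_mult)
      qed
      also have "\<dots> \<le> P * cmod (om (2 * N) - 1)" using z by (intro mult_right_mono) auto
      also have "\<dots> < P * (\<delta> / P)" using omN P0 by (intro mult_strict_left_mono) auto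
      also have "\<dots> = \<delta>" using P0 by simp
      finally have "dist (gg t (om N ^ k * (om (2 * N) * z))) (gg t (om N ^ k * z)) < 1/16"
        using dd[OF in1 in2] by simp
      then show "norm (gg t (om N ^ k * (om (2 * N) * z)) - gg t (om N ^ k * z)) \<le> 1/16"
        by (simp add: dist_norm)
    qed
    then show ?thesis by simp
  qed
  define phi where "phi = (\<lambda>r::real. norm (AA t N (of_real r) - 1))"
  have phicont: "continuous_on {0..P} phi"
  proof -
    have "continuous_on UNIV (\<lambda>r::real. AA t N (of_real r))"
      by (rule continuous_on_compose2[OF AA_cont[OF allinv]]) (auto intro!: continuous_intros)
    then show ?thesis unfolding phi_def
      by (intro continuous_intros) (auto intro: continuous_on_subset)
  qed
  have phi0: "phi 0 = 0"
  proof -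
    have "AA t N 0 * (1 - scaleC (0 ^ N) (t ^ N)) = 1" by (rule AA_inv[OF allinv N0])
    then show ?thesis using N0 by (simp add: phi_def zero_power)
  qed
  have phiP: "phi P \<ge> 1/2"
  proof -
    define h where "h = AA t N (of_real P)"
    define u where "u = scaleC (of_real P ^ N) (t ^ N)"
    define v where "v = scaleC (1 / of_real P ^ N) (xi ^ N)"
    have hu: "h * (1 - u) = 1" unfolding h_def u_def by (rule AA_inv[OF allinv N0])
    have uv: "u * v = 1" using P0 pow_inv[OF tx, of N]
      by (simp add: u_def v_def mult_scaleC_left mult_scaleC_right scaleC_scaleC scaleC_one)
    have "h * (1 - u) * v = v" using hu by simp
    then have "h * v - h * u * v = v" by (simp add: algebra_simps)
    then have "h * v - h = v" using uv by (simp add: mult.assoc)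
    then have hv: "h = h * v - v" by (simp add: algebra_simps)
    have nv: "norm v \<le> 1/3"
    proof -
      have cm: "cmod (1 / complex_of_real P ^ N) = 1 / P ^ N" using P0 by (simp add: norm_divide norm_power)
      have "norm v = norm (xi ^ N) / P ^ N" by (simp add: v_def norm_scaleC cm)
      also have "\<dots> \<le> norm xi ^ N / P ^ N" using P0 by (intro divide_right_mono norm_power_ineq) auto
      also have "\<dots> = (norm xi / P) ^ N" by (simp add: power_divide)
      also have "\<dots> \<le> (norm xi / P) ^ 1" using Pr N0 P0
        by (intro power_decreasing) auto
      finally have "norm v \<le> norm xi / P" by simp
      then show ?thesis using Pr by linarith
    qed
    have "norm h \<le> norm (h * v) + norm v" by (subst hv) (rule norm_triangle_ineq4)
    also have "\<dots> \<le> norm h * norm v + norm v" by (simp add: norm_mult_ineq)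
    also have "\<dots> \<le> norm h * (1/3) + 1/3" using nv by (intro add_mono mult_left_mono) auto
    finally have "norm h \<le> 1/2" by simp
    moreover have "norm (1::'a) \<le> norm h + norm (1 - h)" by (rule norm_triangle_sub)
    ultimately show ?thesis by (simp add: phi_def h_def norm_minus_commute)
  qed
  obtain r where r: "0 \<le> r" "r \<le> P" "phi r = 1/2"
    using IVT'[of phi 0 "1/2" P] phi0 phiP P0 phicont by auto
  define z where "z = (of_real r :: complex)"
  have zP: "cmod z \<le> P" using r by (simp add: z_def)
  define h where "h = AA t N z"
  define h2 where "h2 = AA t (2 * N) z"
  define u where "u = scaleC (z ^ N) (t ^ N)"
  have e: "norm (h - 1) = 1/2" using r by (simp add: phi_def h_def z_def)
  have d: "norm (h - h2) \<le> 1/32" using diff[OF zP] by (simp add: h_def h2_def norm_minus_commute)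
  have k1: "h * (1 - u) = 1" unfolding h_def u_def by (rule AA_inv[OF allinv N0])
  have k2: "(1 - u) * h = 1" unfolding h_def u_def by (rule AA_inv'[OF allinv N0])
  have uu: "u * u = scaleC (z ^ (2 * N)) (t ^ (2 * N))"
    by (simp add: u_def mult_scaleC_left mult_scaleC_right scaleC_scaleC mult_2 power_add)
  have k3: "h2 * (1 - u * u) = 1" unfolding uu h2_def using AA_inv[OF allinv, of "2 * N" z] N0 by simp
  have c: "AA t (2 * N) z * t ^ N = t ^ N * AA t (2 * N) z"
    by (metis AA_comm[OF allinv] power_commuting_commutes)
  have k4: "u * h2 = h2 * u" using c by (simp add: u_def h2_def mult_scaleC_left mult_scaleC_right)
  have key: "(h - 1) * h = (h - h2) * (h + h - 1)" by (rule ring_key[OF k1 k2 k3 k4])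
  define e where "e = h - 1"
  have ne: "norm e = 1/2" using e by (simp add: e_def)
  have "(h - 1) * h = e + e * e" by (simp add: e_def algebra_simps)
  have "norm e - norm (e * e) \<le> norm (e + e * e)" by (metis norm_diff_ineq diff_minus_eq_add)
  moreover have "norm (e * e) \<le> 1/4" using norm_mult_ineq[of e e] ne by simp
  ultimately have lo: "norm ((h - 1) * h) \<ge> 1/4" using ne \<open>(h - 1) * h = e + e * e\<close> by simp
  have "norm (h + h - 1) = norm (1 + e + e)" by (simp add: e_def algebra_simps)
  also have "\<dots> \<le> norm (1::'a) + norm e + norm e" by (metis norm_triangle_ineq order_trans add_right_mono)
  finally have n2: "norm (h + h - 1) \<le> 2" using ne by simp
  have "norm ((h - h2) * (h + h - 1)) \<le> norm (h - h2) * norm (h + h - 1)" by (rule norm_mult_ineq)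
  also have "\<dots> \<le> 1/32 * 2" using d n2 by (intro mult_mono) auto
  finally show False using lo key by simp
qed

lemma jacobson:
  fixes a c :: "'a::complex_banach_algebra_1"
  assumes "z \<noteq> 0" "invertible_el (a * c - scaleC z 1)"
  shows "invertible_el (c * a - scaleC z 1)"
proof -
  obtain w where w: "(a * c - scaleC z 1) * w = 1" "w * (a * c - scaleC z 1) = 1"
    using assms(2) unfolding invertible_el_def by blast
  define s where "s = scaleC z (1::'a)"
  have sc: "s * y = y * s" for y unfolding s_def by (rule scaleC_commute)
  have sc2: "y * (s * u) = s * (y * u)" for y u by (metis mult.assoc sc)
  have w1: "a * c * w - s * w = 1" using w(1) by (simp add: s_def algebra_simps)
  have w2: "w * a * c - w * s = 1" using w(2) by (simp add: s_def algebra_simps)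
  have e1: "(c * a - s) * (c * w * a - 1) = s"
  proof -
    have "(c * a - s) * (c * w * a - 1) = c * (a * c * w - s * w) * a - c * a + s"
      by (simp add: algebra_simps sc2 mult.assoc)
    also have "\<dots> = s" using w1 by simp
    finally show ?thesis .
  qed
  have e2: "(c * w * a - 1) * (c * a - s) = s"
  proof -
    have "(c * w * a - 1) * (c * a - s) = c * (w * a * c - w * s) * a - c * a + s"
      by (simp add: algebra_simps sc2 sc mult.assoc)
    also have "\<dots> = s" using w2 by simp
    finally show ?thesis .
  qed
  define v where "v = scaleC (1 / z) (c * w * a - 1)"
  have "scaleC (1/z) s = 1" using assms(1) by (simp add: s_def scaleC_scaleC scaleC_one)
  then have "(c * a - s) * v = 1" "v * (c * a - s) = 1"
    using e1 e2 by (simp_all add: v_def mult_scaleC_left mult_scaleC_right)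
  then show ?thesis unfolding invertible_el_def s_def by blast
qed

lemma gelfand: "spectrum (a::'a::complex_banach_algebra_1) \<noteq> {}"
proof
  assume sp: "spectrum a = {}"
  have all: "invertible_el (a - scaleC z 1)" for z using sp unfolding spectrum_def by blast
  obtain t where at: "a * t = 1" "t * a = 1" using all[of 0] unfolding invertible_el_def by auto
  have ti: "invertible_el t" using at unfolding invertible_el_def by blast
  have "invertible_el (1 - scaleC w t)" for w
  proof -
    have "t * (a - scaleC w 1) = 1 - scaleC w t"
      using at by (simp add: right_diff_distrib mult_scaleC_right)
    then show ?thesis using inv_prod[OF ti all[of w]] by simp
  qed
  then show False using core_false[of t a] at by blast
qed

lemma quasi_transfer:
  fixes a c :: "'a::complex_banach_algebra_1"
  assumes "quasinilpotent (a * c)"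
  shows "quasinilpotent (c * a)"
proof -
  have "spectrum (c * a) \<subseteq> {0}"
  proof
    fix z assume z: "z \<in> spectrum (c * a)"
    show "z \<in> {0}"
    proof (rule ccontr)
      assume "z \<notin> {0}"
      then have "z \<noteq> 0" by simp
      moreover have "invertible_el (a * c - scaleC z 1)"
        using assms \<open>z \<noteq> 0\<close> unfolding quasinilpotent_def spectrum_def by blast
      ultimately have "invertible_el (c * a - scaleC z 1)" by (rule jacobson)
      then show False using z unfolding spectrum_def by simp
    qed
  qed
  then show ?thesis using gelfand[of "c * a"] unfolding quasinilpotent_def by blast
qed

lemma pow_shift: "((b::'a::ring_1) * a) ^ k * b = b * (a * b) ^ k"
  by (induction k) (auto simp: mult.assoc power_Suc2)

lemma one_dir:
  fixes a b :: "'a::complex_banach_algebra_1"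
  assumes "gpi_Hirano_invertible (a * b)"
  shows "gpi_Hirano_invertible (b * a)"
proof -
  obtain x n where x: "x * (a * b) * x = x" "(a * b) * x = x * (a * b)" "n > 0"
    and q: "quasinilpotent (a * b - (a * b) ^ (n + 2) * x)"
    using assms unfolding gpi_Hirano_invertible_def by blast
  define p where "p = a * b"
  have xp: "x * p * x = x" "p * x = x * p" using x by (simp_all add: p_def)
  have pxx: "p * x * x = x" using xp by (metis mult.assoc)
  define y where "y = b * x * x * a"
  have "y * (b * a) * y = b * (x * x * p * p * x * x) * a"
    by (simp add: y_def p_def mult.assoc)
  also have "x * x * p * p * x * x = x * x"
  proof -
    have "x * x * p * p * x * x = x * (x * p) * (p * x) * x" by (simp add: mult.assoc)
    also have "\<dots> = x * (p * x) * (p * x) * x" using xp by simp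
    also have "\<dots> = (x * p * x) * p * x * x" by (simp add: mult.assoc)
    also have "\<dots> = x * p * x * x" using xp by simp
    also have "\<dots> = x * x" using xp by simp
    finally show ?thesis .
  qed
  finally have y1: "y * (b * a) * y = y" by (simp add: y_def mult.assoc)
  have y2: "(b * a) * y = y * (b * a)"
  proof -
    have "(b * a) * y = b * (p * (x * x)) * a" by (simp add: y_def p_def mult.assoc)
    also have "p * (x * x) = (x * x) * p"
    proof -
      have "p * (x * x) = (p * x) * x" by (simp add: mult.assoc)
      also have "\<dots> = x * (p * x)" using xp(2) by (simp add: mult.assoc)
      also have "\<dots> = (x * x) * p" using xp(2) by (simp add: mult.assoc)
      finally show ?thesis .
    qed
    finally show ?thesis by (simp add: y_def p_def mult.assoc)
  qed
  define c where "c = b * (1 - p ^ (n + 1) * x)"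
  have ac: "a * c = a * b - (a * b) ^ (n + 2) * x"
  proof -
    have "a * c = p - a * b * (p ^ (n + 1) * x)" by (simp add: c_def p_def right_diff_distrib mult.assoc)
    also have "a * b * (p ^ (n + 1) * x) = p ^ (n + 2) * x"
      by (simp only: p_def mult.assoc[symmetric] power_Suc[symmetric]) simp
    finally show ?thesis by (simp add: p_def)
  qed
  have "p ^ (n + 2) * (x * x) = p ^ (n + 1) * x"
  proof -
    have "p ^ (n + 2) * (x * x) = p ^ (n + 1) * (p * x * x)"
    proof -
      have "p ^ (n + 2) = p ^ Suc (n + 1)" by simp
      also have "\<dots> = p ^ (n + 1) * p" by (rule power_Suc2)
      finally have "p ^ (n + 2) = p ^ (n + 1) * p" .
      then show ?thesis by (simp add: mult.assoc)
    qed
    then show ?thesis using pxx by simp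
  qed
  then have ca: "c * a = b * a - (b * a) ^ (n + 2) * y"
  proof -
    assume h: "p ^ (n + 2) * (x * x) = p ^ (n + 1) * x"
    have "(b * a) ^ (n + 2) * y = ((b * a) ^ (n + 2) * b) * (x * x) * a"
      by (simp add: y_def mult.assoc)
    also have "\<dots> = b * (p ^ (n + 2) * (x * x)) * a"
      by (simp add: pow_shift p_def mult.assoc)
    also have "\<dots> = b * p ^ (n + 1) * x * a" using h by (simp add: mult.assoc)
    finally have "(b * a) ^ (n + 2) * y = b * p ^ (n + 1) * x * a" .
    then show ?thesis by (simp add: c_def algebra_simps mult.assoc)
  qed
  have "quasinilpotent (c * a)" using quasi_transfer[of a c] q ac by simp
  then show ?thesis unfolding gpi_Hirano_invertible_def using y1 y2 x(3) ca by auto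
qed

theorem lemma4p4:
  fixes a b :: "'a::complex_banach_algebra_1"
  shows "gpi_Hirano_invertible (a * b) \<longleftrightarrow> gpi_Hirano_invertible (b * a)"
  using one_dir[of a b] one_dir[of b a] by blast

end
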